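(* Let $G$ be a line graph with vertex order $v_1,\ldots,v_n$, let $D$ be a minimal dominating set of $G$, let $u,w\in D$ be adjacent, let $v\in P_D(u)$, and let $X_{uv}$, $D^*$, $Z_{uv}$ be as in the context. Then: $X_{uv}=\emptyset$; each vertex of $Z_{uv}$ is adjacent to exactly one vertex of $P_{D^*}(v)\setminus N[u]$; and each vertex of $P_{D^*}(v)\setminus N[u]$ is adjacent to exactly one vertex of $Z_{uv}$.
   Context: Graphs are finite, simple, undirected; $N(x)$ is the open and $N[x]=N(x)\cup\{x\}$ the closed neighborhood, $N[S]=\bigcup_{x\in S}N[x]$. A line graph is a graph isomorphic to $L(H)$ for some graph $H$, where $L(H)$ has vertex set $E(H)$ and two vertices are adjacent iff the edges share an endpoint. A dominating set is $D\subseteq V(G)$ with $N[D]=V(G)$; it is minimal if no proper subset is dominating. For a dominating set $D$ and $x\in D$, a vertex $y$ is private for $x$ if $y\in N[x]\setminus N[D\setminus\{x\}]$; $P_D[x]$ is the set of such $y$ and $P_D(x)=P_D[x]\cap N(x)$. Fix an order $v_1,\ldots,v_n$ of $V(G)$. Greedy removal from a dominating set $D'$: while the current set $S$ is not a minimal dominating set, remove from $S$ the vertex $v_i$ of smallest index such that $S\setminus\{v_i\}$ is still dominating. Given $D,u,v$: $X_{uv}$ is built by starting from $\emptyset$ and repeatedly adding the smallest-index vertex of $P_D(u)\setminus N[\{v\}\cup X_{uv}]$ while this set is nonempty. Let $D'=(D\setminus\{u\})\cup X_{uv}\cup\{v\}$, let $D^*$ be the result of greedy removal from $D'$, and $Z_{uv}=D'\setminus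 D^*$. *)

theory Defs
  imports Main
begin

text \<open>A finite simple undirected graph is given by a vertex list vs (distinct; its
  order is the fixed vertex order v_1,...,v_n) and an adjacency relation E on set vs.\<close>

definition simple_graph :: "'a list \<Rightarrow> ('a \<Rightarrow> 'a \<Rightarrow> bool) \<Rightarrow> bool" where
  "simple_graph vs E \<longleftrightarrow> distinct vs \<and>
     (\<forall>x y. E x y \<longrightarrow> x \<in> set vs \<and> y \<in> set vs \<and> x \<noteq> y \<and> E y x)"

text \<open>Line graph: G is isomorphic to L(H) for a simple graph H; the vertex x of G
  corresponds to the edge g x (a 2-element set of vertices of H, labelled by naturals).\<close>

definition line_graph :: "'a set \<Rightarrow> ('a \<Rightarrow> 'a \<Rightarrow> bool) \<Rightarrow> bool" where
  "line_graph V E \<longleftrightarrow> (\<exists>g :: 'a \<Rightarrow> nat set. inj_on g V \<and> (\<forall>x\<in>V. card (g x) = 2) \<and>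
     (\<forall>x\<in>V. \<forall>y\<in>V. E x y \<longleftrightarrow> x \<noteq> y \<and> g x \<inter> g y \<noteq> {}))"

definition open_nbhd :: "'a set \<Rightarrow> ('a \<Rightarrow> 'a \<Rightarrow> bool) \<Rightarrow> 'a \<Rightarrow> 'a set" where
  "open_nbhd V E x = {y \<in> V. E x y}"

definition closed_nbhd :: "'a set \<Rightarrow> ('a \<Rightarrow> 'a \<Rightarrow> bool) \<Rightarrow> 'a \<Rightarrow> 'a set" where
  "closed_nbhd V E x = insert x (open_nbhd V E x)"

definition closed_nbhd_set :: "'a set \<Rightarrow> ('a \<Rightarrow> 'a \<Rightarrow> bool) \<Rightarrow> 'a set \<Rightarrow> 'a set" where
  "closed_nbhd_set V E S = (\<Union>x\<in>S. closed_nbhd V E x)"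

definition dominating :: "'a set \<Rightarrow> ('a \<Rightarrow> 'a \<Rightarrow> bool) \<Rightarrow> 'a set \<Rightarrow> bool" where
  "dominating V E D \<longleftrightarrow> D \<subseteq> V \<and> closed_nbhd_set V E D = V"

definition minimal_dominating :: "'a set \<Rightarrow> ('a \<Rightarrow> 'a \<Rightarrow> bool) \<Rightarrow> 'a set \<Rightarrow> bool" where
  "minimal_dominating V E D \<longleftrightarrow> dominating V E D \<and> (\<forall>D'. D' \<subset> D \<longrightarrow> \<not> dominating V E D')"

definition priv_closed :: "'a set \<Rightarrow> ('a \<Rightarrow> 'a \<Rightarrow> bool) \<Rightarrow> 'a set \<Rightarrow> 'a \<Rightarrow> 'a set" where
  "priv_closed V E D x = closed_nbhd V E x - closed_nbhd_set V E (D - {x})"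

definition priv_open :: "'a set \<Rightarrow> ('a \<Rightarrow> 'a \<Rightarrow> bool) \<Rightarrow> 'a set \<Rightarrow> 'a \<Rightarrow> 'a set" where
  "priv_open V E D x = priv_closed V E D x \<inter> open_nbhd V E x"

text \<open>One step of greedy removal: if S is not a minimal dominating set, remove the
  smallest-index v in S with S - {v} dominating (smallest index = first in vs).\<close>
definition greedy_step :: "'a list \<Rightarrow> ('a \<Rightarrow> 'a \<Rightarrow> bool) \<Rightarrow> 'a set \<Rightarrow> 'a set" where
  "greedy_step vs E S =
     (if minimal_dominating (set vs) E S then S
      else (case find (\<lambda>x. x \<in> S \<and> dominating (set vs) E (S - {x})) vs of
              None \<Rightarrow> S
            | Some x \<Rightarrow> S - {x}))"

text \<open>Each effective step removes one vertex, so card S iterations suffice to run the loop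
  to completion.\<close>
definition greedy_removal :: "'a list \<Rightarrow> ('a \<Rightarrow> 'a \<Rightarrow> bool) \<Rightarrow> 'a set \<Rightarrow> 'a set" where
  "greedy_removal vs E S = (greedy_step vs E ^^ card S) S"

text \<open>Construction of X_uv: repeatedly add the smallest-index vertex of
  P_D(u) - N[{v} \<union> X]; each step adds a new vertex, so length vs iterations suffice.\<close>
definition X_step :: "'a list \<Rightarrow> ('a \<Rightarrow> 'a \<Rightarrow> bool) \<Rightarrow> 'a set \<Rightarrow> 'a \<Rightarrow> 'a \<Rightarrow> 'a set \<Rightarrow> 'a set" where
  "X_step vs E D u v X =
     (case find (\<lambda>y. y \<in> priv_open (set vs) E D u - closed_nbhd_set (set vs) E (insert v X)) vs of
        None \<Rightarrow> X
      | Some y \<Rightarrow> insert y X)"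

definition X_uv :: "'a list \<Rightarrow> ('a \<Rightarrow> 'a \<Rightarrow> bool) \<Rightarrow> 'a set \<Rightarrow> 'a \<Rightarrow> 'a \<Rightarrow> 'a set" where
  "X_uv vs E D u v = (X_step vs E D u v ^^ length vs) {}"

end

theory Submission
  imports Defs
begin

lemma cn_iff: "p \<in> closed_nbhd V E x \<longleftrightarrow> p = x \<or> (p \<in> V \<and> E x p)"
  by (auto simp: closed_nbhd_def open_nbhd_def)

lemma cns_iff: "p \<in> closed_nbhd_set V E S \<longleftrightarrow> (\<exists>x\<in>S. p = x \<or> (p \<in> V \<and> E x p))"
  by (auto simp: closed_nbhd_set_def cn_iff)

lemma po_iff: "p \<in> priv_open V E D x \<longleftrightarrow>
   p \<in> V \<and> E x p \<and> \<not>(\<exists>x'\<in>D-{x}. p = x' \<or> (p \<in> V \<and> E x' p))"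
  by (auto simp: priv_open_def priv_closed_def cns_iff cn_iff open_nbhd_def)

lemma cns_sub: "S \<subseteq> V \<Longrightarrow> closed_nbhd_set V E S \<subseteq> V"
  by (auto simp: cns_iff)

lemma dom_iff: "dominating V E S \<longleftrightarrow> S \<subseteq> V \<and> (\<forall>p\<in>V. p \<in> closed_nbhd_set V E S)"
  unfolding dominating_def using cns_sub by blast

lemma greedy_step_cases:
  "greedy_step vs E S = S \<or> (\<exists>x\<in>S. dominating (set vs) E (S - {x}) \<and> greedy_step vs E S = S - {x})"
proof (cases "find (\<lambda>x. x \<in> S \<and> dominating (set vs) E (S - {x})) vs")
  case None
  then show ?thesis unfolding greedy_step_def by auto
next
  case (Some a)
  then have "a \<in> S \<and> dominating (set vs) E (S - {a})"
    by (auto simp: find_Some_iff)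
  then show ?thesis using Some unfolding greedy_step_def by auto
qed

lemma greedy_iter_sub: "(greedy_step vs E ^^ n) S0 \<subseteq> S0"
proof (induction n)
  case 0 then show ?case by simp
next
  case (Suc n)
  then show ?case using greedy_step_cases[of vs E "(greedy_step vs E ^^ n) S0"] by auto
qed


lemma greedy_iter_dom: "dominating (set vs) E S0 \<Longrightarrow> dominating (set vs) E ((greedy_step vs E ^^ n) S0)"
proof (induction n)
  case 0 then show ?case by simp
next
  case (Suc n)
  let ?T = "(greedy_step vs E ^^ n) S0"
  have "dominating (set vs) E ?T" using Suc by blast
  moreover have "greedy_step vs E ?T = ?T \<or> (\<exists>x\<in>?T. dominating (set vs) E (?T - {x}) \<and> greedy_step vs E ?T = ?T - {x})"
    by (rule greedy_step_cases)
  ultimately have "dominating (set vs) E (greedy_step vs E ?T)" by metis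
  then show ?case by simp
qed

lemma greedy_stage:
  assumes "A \<inter> (greedy_step vs E ^^ n) S0 = {}" "A \<inter> S0 \<noteq> {}"
  shows "\<exists>S z. S \<subseteq> S0 \<and> S \<inter> A = {z} \<and> dominating (set vs) E (S - {z})"
  using assms
proof (induction n)
  case 0 then show ?case by simp
next
  case (Suc n)
  let ?T = "(greedy_step vs E ^^ n) S0"
  show ?case
  proof (cases "A \<inter> ?T = {}")
    case True then show ?thesis by (rule Suc.IH[OF _ Suc.prems(2)])
  next
    case False
    have "greedy_step vs E ?T \<noteq> ?T" using False Suc.prems(1) by auto
    then obtain x where x: "x \<in> ?T" "dominating (set vs) E (?T - {x})" "greedy_step vs E ?T = ?T - {x}"
      using greedy_step_cases[of vs E ?T] by auto
    have "A \<inter> (?T - {x}) = {}" using Suc.prems(1) x(3) by simp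
    then have "?T \<inter> A = {x}" using False by blast
    moreover have "?T \<subseteq> S0" by (rule greedy_iter_sub)
    ultimately show ?thesis using x(2) by (intro exI[of _ ?T] exI[of _ x]) simp
  qed
qed

lemma card2: assumes "card A = 2" "A \<inter> B \<noteq> {}" shows "\<exists>c. A - B \<subseteq> {c}"
proof -
  obtain a b where ab: "A = {a,b}" using assms(1) by (meson card_2_iff)
  show ?thesis
  proof (cases "a \<in> B")
    case True then show ?thesis using ab by blast
  next
    case False then have "b \<in> B" using ab assms(2) by blast
    then show ?thesis using ab by blast
  qed
qed

lemma card2_eq: assumes "card A = 2" "b \<in> A" "c \<in> A" "b \<noteq> c" shows "A = {b, c}"
proof -
  have "finite A" using assms(1) by (metis card.infinite zero_neq_numeral)
  moreover have "{b,c} \<subseteq> A" using assms by blast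
  moreover have "card {b,c} = 2" using assms(4) by simp
  ultimately show ?thesis using assms(1) by (metis card_subset_eq)
qed

theorem lemma4:
  fixes vs :: "'a list" and E :: "'a \<Rightarrow> 'a \<Rightarrow> bool" and D :: "'a set" and u w v :: 'a
  assumes "simple_graph vs E"
    and "line_graph (set vs) E"
    and "minimal_dominating (set vs) E D"
    and "u \<in> D" and "w \<in> D" and "E u w"
    and "v \<in> priv_open (set vs) E D u"
  defines "X \<equiv> X_uv vs E D u v"
  defines "D' \<equiv> (D - {u}) \<union> X \<union> {v}"
  defines "Dstar \<equiv> greedy_removal vs E D'"
  defines "Z \<equiv> D' - Dstar"
  shows "X = {}
    \<and> (\<forall>z\<in>Z. \<exists>!y. y \<in> priv_open (set vs) E Dstar v - closed_nbhd (set vs) E u \<and> E z y)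
    \<and> (\<forall>y\<in>priv_open (set vs) E Dstar v - closed_nbhd (set vs) E u. \<exists>!z. z \<in> Z \<and> E y z)"
proof -
  let ?V = "set vs"
  have sg: "\<And>x y. E x y \<Longrightarrow> x \<in> ?V \<and> y \<in> ?V \<and> x \<noteq> y \<and> E y x"
    using assms(1) unfolding simple_graph_def by blast
  obtain g :: "'a \<Rightarrow> nat set" where ginj: "inj_on g ?V" and g2': "\<forall>x\<in>?V. card (g x) = 2"
    and gE': "\<forall>x\<in>?V. \<forall>y\<in>?V. E x y \<longleftrightarrow> x \<noteq> y \<and> g x \<inter> g y \<noteq> {}"
    using assms(2) unfolding line_graph_def by (elim exE conjE) (rule that)
  have g2: "\<And>x. x\<in>?V \<Longrightarrow> card (g x) = 2" using g2' by simp
  have gE: "\<And>x y. x\<in>?V \<Longrightarrow> y\<in>?V \<Longrightarrow> E x y \<longleftrightarrow> x \<noteq> y \<and> g x \<inter> g y \<noteq> {}"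
    using gE' by simp
  have DV: "D \<subseteq> ?V" using assms(3) unfolding minimal_dominating_def dom_iff by blast
  have Ddom: "\<And>p. p \<in> ?V \<Longrightarrow> \<exists>x\<in>D. p = x \<or> E x p"
    using assms(3) unfolding minimal_dominating_def dom_iff cns_iff by blast
  have Dmin: "\<exists>p\<in>?V. \<forall>x\<in>D-{z}. p \<noteq> x \<and> \<not> E x p" if "z \<in> D" for z
  proof -
    have "D - {z} \<subset> D" using that by blast
    then have "\<not> dominating ?V E (D - {z})" using assms(3) unfolding minimal_dominating_def by blast
    then show ?thesis using DV unfolding dom_iff cns_iff by blast
  qed
  have v: "v \<in> ?V" "E u v" using assms(7) unfolding po_iff by blast+
  have vnot: "\<And>x. x \<in> D \<Longrightarrow> x \<noteq> u \<Longrightarrow> v \<noteq> x \<and> \<not> E x v"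
    using assms(7) unfolding po_iff by blast
  have uV: "u \<in> ?V" and wV: "w \<in> ?V" and uw: "u \<noteq> w" using sg[OF assms(6)] by auto
  have vnD: "v \<notin> D" using vnot sg[OF v(2)] by blast
  have privu: "y = v \<or> E v y" if y: "y \<in> priv_open ?V E D u" for y
  proof -
    have yV: "y \<in> ?V" and Euy: "E u y" and ynw: "y \<noteq> w" "\<not> E w y"
      using y assms(5) uw unfolding po_iff by auto
    have vw: "v \<noteq> w" "\<not> E w v" using vnot[OF assms(5)] uw by auto
    have guw: "g u \<inter> g w \<noteq> {}" using gE[OF uV wV] assms(6) by blast
    obtain c where c: "g u - g w \<subseteq> {c}" using card2[OF g2[OF uV] guw] by blast
    have "g u \<inter> g y \<noteq> {}" using gE[OF uV yV] Euy by blast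
    moreover have "g w \<inter> g y = {}" using gE[OF wV yV] ynw by blast
    ultimately have cy: "c \<in> g y" using c by blast
    have "g u \<inter> g v \<noteq> {}" using gE[OF uV v(1)] v(2) by blast
    moreover have "g w \<inter> g v = {}" using gE[OF wV v(1)] vw by blast
    ultimately have cv: "c \<in> g v" using c by blast
    show "y = v \<or> E v y" using gE[OF v(1) yV] cy cv by blast
  qed
  have Xs: "X_step vs E D u v {} = {}"
  proof -
    have "\<forall>y. y \<in> priv_open ?V E D u \<longrightarrow> y \<in> closed_nbhd_set ?V E (insert v {})"
    proof (intro allI impI)
      fix y assume y: "y \<in> priv_open ?V E D u"
      then have "y \<in> ?V" unfolding po_iff by blast
      then show "y \<in> closed_nbhd_set ?V E (insert v {})" using privu[OF y] unfolding cns_iff by blast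
    qed
    then have "find (\<lambda>y. y \<in> priv_open ?V E D u - closed_nbhd_set ?V E (insert v {})) vs = None"
      unfolding find_None_iff by blast
    then show ?thesis unfolding X_step_def by simp
  qed
  have X0: "X = {}"
  proof -
    have "(X_step vs E D u v ^^ n) {} = {}" for n by (induction n) (simp_all add: Xs)
    then show ?thesis unfolding X_def X_uv_def by blast
  qed
  have D'eq: "D' = (D - {u}) \<union> {v}" unfolding D'_def X0 by simp
  have D'V: "D' \<subseteq> ?V" using D'eq DV v(1) by blast
  have D'dom: "dominating ?V E D'"
    unfolding dom_iff cns_iff
  proof (intro conjI ballI)
    show "D' \<subseteq> ?V" by (rule D'V)
    fix p assume p: "p \<in> ?V"
    show "\<exists>x\<in>D'. p = x \<or> (p \<in> ?V \<and> E x p)"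
    proof (cases "\<exists>x\<in>D-{u}. p = x \<or> E x p")
      case True then show ?thesis using D'eq p by blast
    next
      case False
      have "E w u" using sg[OF assms(6)] by blast
      then have "p \<noteq> u" using False assms(5) uw by blast
      obtain x where x: "x \<in> D" "p = x \<or> E x p" using Ddom[OF p] by blast
      have "x = u" using x False by blast
      then have "E u p" using x \<open>p \<noteq> u\<close> by blast
      then have "p \<in> priv_open ?V E D u" unfolding po_iff using p False by blast
      then have "p = v \<or> E v p" by (rule privu)
      then show ?thesis using D'eq p by blast
    qed
  qed
  have Ds_sub: "Dstar \<subseteq> D'" unfolding Dstar_def greedy_removal_def by (rule greedy_iter_sub)
  have Ds_dom: "dominating ?V E Dstar" unfolding Dstar_def greedy_removal_def by (rule greedy_iter_dom[OF D'dom])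
  have Ds_dom': "\<And>p. p \<in> ?V \<Longrightarrow> \<exists>x\<in>Dstar. p = x \<or> E x p"
    using Ds_dom unfolding dom_iff cns_iff by blast
  have vDs: "v \<in> Dstar"
  proof -
    obtain x where x: "x \<in> Dstar" "v = x \<or> E x v" using Ds_dom'[OF v(1)] by blast
    have "x \<in> D'" using x Ds_sub by blast
    show ?thesis
    proof (cases "x = v")
      case True then show ?thesis using x by simp
    next
      case False
      then have "x \<in> D" "x \<noteq> u" using \<open>x \<in> D'\<close> D'eq by auto
      then show ?thesis using vnot x(2) by blast
    qed
  qed
  have ZD: "\<And>z. z \<in> Z \<Longrightarrow> z \<in> D \<and> z \<noteq> u \<and> z \<in> D' \<and> z \<notin> Dstar \<and> z \<in> ?V"
    using vDs D'eq DV unfolding Z_def by blast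
  have DsD: "\<And>x'. x' \<in> Dstar \<Longrightarrow> x' \<noteq> v \<Longrightarrow> x' \<in> D \<and> x' \<noteq> u"
    using Ds_sub D'eq by blast
  have zv: "g z \<inter> g v = {}" if "z \<in> D" "z \<noteq> u" for z
  proof -
    have "z \<in> ?V" using that DV by blast
    then show ?thesis using gE[of z v] v(1) vnot[OF that] by blast
  qed
  define P where "P = priv_open ?V E Dstar v - closed_nbhd ?V E u"
  have Pmem: "y \<in> P \<longleftrightarrow> y \<in> ?V \<and> E v y \<and> (\<forall>x\<in>Dstar-{v}. y \<noteq> x \<and> \<not> E x y) \<and> y \<noteq> u \<and> \<not> E u y" for y
    unfolding P_def Diff_iff po_iff cn_iff by blast
  have core: "{x\<in>D'. e \<in> g x} = {z0} \<and> (\<exists>S. S \<subseteq> D' \<and> S \<inter> {x\<in>D'. e \<in> g x} = {z0} \<and> dominating ?V E (S - {z0}))"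
    if y: "y \<in> P" and ey: "e \<in> g y" and ev: "e \<notin> g v" and z0: "z0 \<in> D'" "e \<in> g z0" for y e z0
  proof -
    define A where "A = {x\<in>D'. e \<in> g x}"
    have AD: "x \<in> D \<and> x \<noteq> u \<and> x \<in> ?V" if "x \<in> A" for x
    proof -
      have "x \<noteq> v" using that ev unfolding A_def by auto
      then show ?thesis using that D'eq DV unfolding A_def by blast
    qed
    have ADs: "A \<inter> Dstar = {}"
    proof (rule ccontr)
      assume "A \<inter> Dstar \<noteq> {}" then obtain x where x: "x \<in> A" "x \<in> Dstar" by blast
      have "x \<noteq> v" using x(1) ev unfolding A_def by auto
      have yV: "y \<in> ?V" using y Pmem by blast
      have "e \<in> g x" using x(1) unfolding A_def by blast
      then have "y = x \<or> E x y" using gE[of x y] AD[OF x(1)] yV ey by blast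
      then show False using y Pmem x(2) \<open>x\<noteq>v\<close> by blast
    qed
    have "A \<inter> (greedy_step vs E ^^ card D') D' = {}" using ADs unfolding Dstar_def greedy_removal_def .
    moreover have "A \<inter> D' \<noteq> {}" using z0 unfolding A_def by blast
    ultimately obtain S z where S: "S \<subseteq> D'" "S \<inter> A = {z}" "dominating ?V E (S - {z})"
      using greedy_stage by metis
    have zA: "z \<in> A" using S(2) by blast
    have zD: "z \<in> D" "z \<noteq> u" "z \<in> ?V" using AD[OF zA] by auto
    have Aeq: "A = {z}"
    proof (rule ccontr)
      assume "A \<noteq> {z}" then obtain z' where z': "z' \<in> A" "z' \<noteq> z" using zA by blast
      from S(3) zD(3) obtain x where x: "x \<in> S - {z}" "z = x \<or> (z \<in> ?V \<and> E x z)"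
        unfolding dom_iff cns_iff by blast
      have Exz: "E x z" using x by blast
      have xV: "x \<in> ?V" using sg[OF Exz] by blast
      have "x \<notin> A" using x(1) S(2) by blast
      then have exn: "e \<notin> g x" using x(1) S(1) unfolding A_def by blast
      have "x \<noteq> v" using gE[OF xV zD(3)] Exz zv[OF zD(1,2)] by blast
      then have xD: "x \<in> D" "x \<noteq> z" using x(1) S(1) D'eq by auto
      have ez: "e \<in> g z" using zA unfolding A_def by blast
      have gzx: "g x \<inter> g z \<noteq> {}" using gE[OF xV zD(3)] Exz by blast
      have "g z \<inter> {e} \<noteq> {}" using ez by blast
      then obtain h where h: "g z - {e} \<subseteq> {h}" using card2[OF g2[OF zD(3)]] by blast
      have hx: "h \<in> g x" using h gzx exn by blast
      have "dominating ?V E (D - {z})"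
        unfolding dom_iff cns_iff
      proof (intro conjI ballI)
        show "D - {z} \<subseteq> ?V" using DV by blast
        fix p assume p: "p \<in> ?V"
        obtain x' where x': "x' \<in> D" "p = x' \<or> E x' p" using Ddom[OF p] by blast
        show "\<exists>x\<in>D - {z}. p = x \<or> (p \<in> ?V \<and> E x p)"
        proof (cases "x' = z")
          case False then show ?thesis using x' p by blast
        next
          case True
          show ?thesis
          proof (cases "p = z")
            case True then show ?thesis using xD Exz p by blast
          next
            case False
            then have "E z p" using x' \<open>x' = z\<close> by blast
            then have "g z \<inter> g p \<noteq> {}" using gE[OF zD(3) p] by blast
            then have "e \<in> g p \<or> h \<in> g p" using h by blast
            then show ?thesis
            proof
              assume "e \<in> g p"
              have z'D: "z' \<in> D" "z' \<in> ?V" using AD[OF z'(1)] by auto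
              have "e \<in> g z'" using z'(1) unfolding A_def by blast
              then have "p = z' \<or> E z' p" using gE[OF z'D(2) p] \<open>e \<in> g p\<close> by blast
              then show ?thesis using z'D z'(2) p by blast
            next
              assume "h \<in> g p"
              have "p = x \<or> E x p" using gE[OF xV p] \<open>h \<in> g p\<close> hx by blast
              then show ?thesis using xD p by blast
            qed
          qed
        qed
      qed
      moreover have "D - {z} \<subset> D" using zD by blast
      ultimately show False using assms(3) unfolding minimal_dominating_def by blast
    qed
    have "z0 \<in> A" using z0 unfolding A_def by blast
    then have "z = z0" using Aeq by blast
    then show ?thesis unfolding A_def[symmetric] using Aeq S by blast
  qed
  have c3: "\<exists>!z. z \<in> Z \<and> E y z" if y: "y \<in> P" for y
  proof -
    have yV: "y \<in> ?V" and Evy: "E v y" and ynDs: "\<forall>x\<in>Dstar-{v}. y \<noteq> x \<and> \<not> E x y"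
      and yu: "y \<noteq> u" "\<not> E u y" using y Pmem by auto
    obtain x where x: "x \<in> D" "y = x \<or> E x y" using Ddom[OF yV] by blast
    have "x \<noteq> u" using x yu by blast
    have "y \<noteq> x" using vnot[OF x(1) \<open>x\<noteq>u\<close>] sg[OF Evy] by blast
    then have Exy: "E x y" using x by blast
    have "x \<in> D'" using D'eq x(1) \<open>x\<noteq>u\<close> by blast
    have "x \<notin> Dstar" using ynDs Exy vnD x(1) by blast
    then have xZ: "x \<in> Z" using \<open>x \<in> D'\<close> unfolding Z_def by blast
    have ex: "\<exists>z. z \<in> Z \<and> E y z" using xZ sg[OF Exy] by blast
    have uq: "z1 = z2" if z1: "z1 \<in> Z" "E y z1" and z2: "z2 \<in> Z" "E y z2" for z1 z2
    proof -
      have "g y \<inter> g v \<noteq> {}" using gE[OF v(1) yV] Evy by blast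
      then obtain c where c: "g y - g v \<subseteq> {c}" using card2[OF g2[OF yV]] by blast
      have z1D: "z1 \<in> D" "z1 \<noteq> u" "z1 \<in> D'" "z1 \<in> ?V" using ZD[OF z1(1)] by auto
      have z2D: "z2 \<in> D" "z2 \<noteq> u" "z2 \<in> D'" "z2 \<in> ?V" using ZD[OF z2(1)] by auto
      have "g y \<inter> g z1 \<noteq> {}" using gE[OF yV z1D(4)] z1(2) by blast
      then have c1: "c \<in> g z1" "c \<in> g y" "c \<notin> g v" using c zv[OF z1D(1,2)] by blast+
      have "g y \<inter> g z2 \<noteq> {}" using gE[OF yV z2D(4)] z2(2) by blast
      then have c2: "c \<in> g z2" using c zv[OF z2D(1,2)] by blast
      have A: "{x\<in>D'. c \<in> g x} = {z1}" using core[OF y c1(2) c1(3) z1D(3) c1(1)] by blast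
      have "z2 \<in> {x\<in>D'. c \<in> g x}" using z2D(3) c2 by simp
      then show "z1 = z2" using A by simp
    qed
    show "\<exists>!z. z \<in> Z \<and> E y z" using ex uq by blast
  qed
  have c2: "\<exists>!y. y \<in> P \<and> E z y" if zZ: "z \<in> Z" for z
  proof -
    have zD: "z \<in> D" "z \<noteq> u" "z \<notin> Dstar" "z \<in> D'" "z \<in> ?V" using ZD[OF zZ] by auto
    obtain p where p: "p \<in> ?V" "\<forall>x\<in>D-{z}. p \<noteq> x \<and> \<not> E x p" using Dmin[OF zD(1)] by blast
    obtain x where x: "x \<in> Dstar" "p = x \<or> E x p" using Ds_dom'[OF p(1)] by blast
    have "x = v"
    proof (rule ccontr)
      assume "x \<noteq> v"
      then have "x \<in> D" "x \<noteq> u" using DsD x(1) by auto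
      moreover have "x \<noteq> z" using x(1) zD(3) by blast
      ultimately show False using p(2) x(2) by blast
    qed
    have uDz: "u \<in> D - {z}" using assms(4) zD(2) by blast
    have "p \<noteq> v" using p(2) uDz v(2) by blast
    then have Evp: "E v p" using x \<open>x = v\<close> by blast
    have "\<forall>x'\<in>Dstar-{v}. p \<noteq> x' \<and> \<not> E x' p"
    proof
      fix x' assume "x' \<in> Dstar - {v}"
      then have "x' \<in> D - {z}" using DsD zD(3) by blast
      then show "p \<noteq> x' \<and> \<not> E x' p" using p(2) by blast
    qed
    then have pP: "p \<in> P" unfolding Pmem using p Evp uDz by blast
    obtain x'' where x'': "x'' \<in> D" "p = x'' \<or> E x'' p" using Ddom[OF p(1)] by blast
    have "x'' = z" using x'' p(2) by blast
    have "p \<noteq> z" using sg[OF Evp] vnot[OF zD(1,2)] by blast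
    then have Ezp: "E z p" using x'' \<open>x'' = z\<close> by blast
    have uq: "y1 = y2" if y1: "y1 \<in> P" "E z y1" and y2: "y2 \<in> P" "E z y2" for y1 y2
    proof -
      have y1V: "y1 \<in> ?V" and Evy1: "E v y1" and y1u: "y1 \<noteq> u" "\<not> E u y1" using y1(1) Pmem by auto
      have y2V: "y2 \<in> ?V" and Evy2: "E v y2" and y2u: "y2 \<noteq> u" "\<not> E u y2" using y2(1) Pmem by auto
      have zvd: "g z \<inter> g v = {}" using zv zD by blast
      have "g y1 \<inter> g v \<noteq> {}" using gE[OF v(1) y1V] Evy1 by blast
      then obtain c1 where c1: "g y1 - g v \<subseteq> {c1}" using card2[OF g2[OF y1V]] by blast
      have "g z \<inter> g y1 \<noteq> {}" using gE[OF zD(5) y1V] y1(2) by blast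
      then have c1z: "c1 \<in> g z" "c1 \<in> g y1" "c1 \<notin> g v" using c1 zvd by blast+
      have "g y2 \<inter> g v \<noteq> {}" using gE[OF v(1) y2V] Evy2 by blast
      then obtain c2 where c2: "g y2 - g v \<subseteq> {c2}" using card2[OF g2[OF y2V]] by blast
      have "g z \<inter> g y2 \<noteq> {}" using gE[OF zD(5) y2V] y2(2) by blast
      then have c2z: "c2 \<in> g z" "c2 \<in> g y2" "c2 \<notin> g v" using c2 zvd by blast+
      have core1: "{x\<in>D'. c1 \<in> g x} = {z} \<and> (\<exists>S. S \<subseteq> D' \<and> S \<inter> {x\<in>D'. c1 \<in> g x} = {z} \<and> dominating ?V E (S - {z}))"
        by (rule core[OF y1(1) c1z(2) c1z(3) zD(4) c1z(1)])
      have A2: "{x\<in>D'. c2 \<in> g x} = {z}" using core[OF y2(1) c2z(2) c2z(3) zD(4) c2z(1)] by blast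
      show "y1 = y2"
      proof (cases "c1 = c2")
        case True
        have "g v \<inter> g u \<noteq> {}" using gE[OF uV v(1)] v(2) by blast
        then obtain b where b: "g v - g u \<subseteq> {b}" using card2[OF g2[OF v(1)]] by blast
        have "g u \<inter> g y1 = {}" using gE[OF uV y1V] y1u by blast
        then have b1: "b \<in> g y1" "b \<in> g v" using \<open>g y1 \<inter> g v \<noteq> {}\<close> b by blast+
        have "g u \<inter> g y2 = {}" using gE[OF uV y2V] y2u by blast
        then have b2: "b \<in> g y2" using \<open>g y2 \<inter> g v \<noteq> {}\<close> b by blast
        have "b \<noteq> c1" using b1(2) c1z(3) by blast
        then have "g y1 = {b, c1}" "g y2 = {b, c1}"
          using card2_eq[OF g2[OF y1V] b1(1) c1z(2)] card2_eq[OF g2[OF y2V] b2 c2z(2)] True by auto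
        then show ?thesis using inj_onD[OF ginj _ y1V y2V] by simp
      next
        case False
        from core1 obtain S where S: "S \<subseteq> D'" "S \<inter> {x\<in>D'. c1 \<in> g x} = {z}" "dominating ?V E (S - {z})"
          by blast
        obtain x where x: "x \<in> S - {z}" "z = x \<or> (z \<in> ?V \<and> E x z)"
          using S(3) zD(5) unfolding dom_iff cns_iff by blast
        have Exz: "E x z" using x by blast
        have xV: "x \<in> ?V" using sg[OF Exz] by blast
        have "g z = {c1, c2}" using card2_eq[OF g2[OF zD(5)] c1z(1) c2z(1) False] .
        moreover have "g x \<inter> g z \<noteq> {}" using gE[OF xV zD(5)] Exz by blast
        ultimately have "c1 \<in> g x \<or> c2 \<in> g x" by auto
        moreover have "x \<in> D'" using x(1) S(1) by blast
        ultimately have "x \<in> S \<inter> {x\<in>D'. c1 \<in> g x} \<or> x \<in> {x\<in>D'. c2 \<in> g x}" using x(1) by auto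
        then show ?thesis using x(1) S(2) A2 by auto
      qed
    qed
    show "\<exists>!y. y \<in> P \<and> E z y" using pP Ezp uq by blast
  qed
  show ?thesis unfolding P_def[symmetric] using X0 c2 c3 by blast
qed

end
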